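(* Let $W$ and $V$ be B-DMCs which are symmetric, symmetrized under the same permutation. Then for every $N=2^n$ and $i\in\{1,\dots,N\}$, $Z_{2N}^{(2i)}(W,V)=\big(Z_N^{(i)}(W,V)\big)^2$. Consequently, $Z_N^{(i)}(W,V)-Z_N^{(i)}(V)\le0$ implies $Z_{2N}^{(2i)}(W,V)-Z_{2N}^{(2i)}(V)\le0$.
   Context: A B-DMC $W:\{0,1\}\to\mathcal Y$ is given by transition probabilities $W(y|x)$, $\mathcal Y$ finite; $L_W(y)=W(y|1)/W(y|0)$. $W,V$ are "symmetric, symmetrized under the same permutation" if there is an involutive permutation $\pi$ of $\mathcal Y$ with $W(y|1)=W(\pi(y)|0)$, $V(y|1)=V(\pi(y)|0)$ for all $y$. For a B-DMC $W$: $W^-(y_1y_2|u_1)=\sum_{u_2}\tfrac12W(y_1|u_1\oplus u_2)W(y_2|u_2)$ and $W^+(y_1y_2u_1|u_2)=\tfrac12W(y_1|u_1\oplus u_2)W(y_2|u_2)$. Synthetic channels: $W_1^{(1)}=W$, $W_{2N}^{(2i-1)}=(W_N^{(i)})^-$, $W_{2N}^{(2i)}=(W_N^{(i)})^+$ (and likewise for $V$). Mismatched Bhattacharyya parameter: for B-DMCs $W,V$ on the same output alphabet $\mathcal Y$, $Z(W,V)=\sum_{y\in\mathcal Y}W(y|0)\sqrt{L_V(y)}$; $Z_N^{(i)}(W,V)=Z(W_N^{(i)},V_N^{(i)})$ and $Z_N^{(i)}(V)=Z_N^{(i)}(V,V)$. *)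

theory Defs
  imports Complex_Main
begin

text \<open>Input bit 0 is False, 1 is True; addition mod 2 is \<open>(\<noteq>)\<close>.
  A B-DMC with finite output alphabet 'y is a function W y x = W(y|x).\<close>

definition bdmc :: "('y::finite \<Rightarrow> bool \<Rightarrow> real) \<Rightarrow> bool" where
  "bdmc W \<longleftrightarrow> (\<forall>y x. 0 \<le> W y x) \<and> (\<forall>x. (\<Sum>y\<in>UNIV. W y x) = 1)"

definition sym_same_perm :: "('y \<Rightarrow> bool \<Rightarrow> real) \<Rightarrow> ('y \<Rightarrow> bool \<Rightarrow> real) \<Rightarrow> bool" where
  "sym_same_perm W V \<longleftrightarrow> (\<exists>\<pi>::'y \<Rightarrow> 'y. bij \<pi> \<and> (\<forall>y. \<pi> (\<pi> y) = y) \<and>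
      (\<forall>y. W y True = W (\<pi> y) False \<and> V y True = V (\<pi> y) False))"

text \<open>Uniform output type for all synthetic channels:
  Leaf y (original output), Pair a b (output of W^-), Trip a b u1 (output of W^+).\<close>
datatype 'y out = Leaf 'y | Pair "'y out" "'y out" | Trip "'y out" "'y out" bool

definition lift_ch :: "('y \<Rightarrow> bool \<Rightarrow> real) \<Rightarrow> 'y out \<Rightarrow> bool \<Rightarrow> real" where
  "lift_ch W z u = (case z of Leaf y \<Rightarrow> W y u | _ \<Rightarrow> 0)"

definition ch_minus :: "('y out \<Rightarrow> bool \<Rightarrow> real) \<Rightarrow> 'y out \<Rightarrow> bool \<Rightarrow> real" where
  "ch_minus W z u1 = (case z of Pair y1 y2 \<Rightarrow> (\<Sum>u2\<in>UNIV. 1/2 * W y1 (u1 \<noteq> u2) * W y2 u2) | _ \<Rightarrow> 0)"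

definition ch_plus :: "('y out \<Rightarrow> bool \<Rightarrow> real) \<Rightarrow> 'y out \<Rightarrow> bool \<Rightarrow> real" where
  "ch_plus W z u2 = (case z of Trip y1 y2 u1 \<Rightarrow> 1/2 * W y1 (u1 \<noteq> u2) * W y2 u2 | _ \<Rightarrow> 0)"

text \<open>synth W n i = W_N^{(i)} with N = 2^n, 1 \<le> i \<le> N.
  W_{2N}^{(2j-1)} = (W_N^{(j)})^-, W_{2N}^{(2j)} = (W_N^{(j)})^+.\<close>
fun synth :: "('y \<Rightarrow> bool \<Rightarrow> real) \<Rightarrow> nat \<Rightarrow> nat \<Rightarrow> 'y out \<Rightarrow> bool \<Rightarrow> real" where
  "synth W 0 i = lift_ch W"
| "synth W (Suc n) i = (if even i then ch_plus (synth W n (i div 2))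
                        else ch_minus (synth W n ((i + 1) div 2)))"

fun alph :: "nat \<Rightarrow> nat \<Rightarrow> 'y out set" where
  "alph 0 i = range Leaf"
| "alph (Suc n) i = (if even i
     then {Trip a b u | a b u. a \<in> alph n (i div 2) \<and> b \<in> alph n (i div 2)}
     else {Pair a b | a b. a \<in> alph n ((i + 1) div 2) \<and> b \<in> alph n ((i + 1) div 2)})"

definition LR :: "('o \<Rightarrow> bool \<Rightarrow> real) \<Rightarrow> 'o \<Rightarrow> real" where
  "LR V y = V y True / V y False"

definition Zmis :: "'o set \<Rightarrow> ('o \<Rightarrow> bool \<Rightarrow> real) \<Rightarrow> ('o \<Rightarrow> bool \<Rightarrow> real) \<Rightarrow> real" where
  "Zmis A W V = (\<Sum>y\<in>A. W y False * sqrt (LR V y))"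

definition ZN :: "nat \<Rightarrow> nat \<Rightarrow> ('y \<Rightarrow> bool \<Rightarrow> real) \<Rightarrow> ('y \<Rightarrow> bool \<Rightarrow> real) \<Rightarrow> real" where
  "ZN n i W V = Zmis (alph n i) (synth W n i) (synth V n i)"

end

theory Submission
  imports Defs
begin

definition symP :: "'o set \<Rightarrow> ('o \<Rightarrow> bool \<Rightarrow> real) \<Rightarrow> ('o \<Rightarrow> bool \<Rightarrow> real) \<Rightarrow> ('o \<Rightarrow> 'o) \<Rightarrow> bool" where
  "symP A W V \<pi> \<longleftrightarrow> (\<forall>y\<in>A. \<pi> y \<in> A \<and> \<pi> (\<pi> y) = y \<and> W y True = W (\<pi> y) False \<and> V y True = V (\<pi> y) False)"

lemma sym_sum:
  assumes "symP A W V \<pi>"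
  shows "(\<Sum>a\<in>A. W a True * sqrt (V a False / V a True)) = (\<Sum>a\<in>A. W a False * sqrt (V a True / V a False))"
proof -
  have bij: "bij_betw \<pi> A A"
    using assms unfolding symP_def
    by (intro bij_betw_byWitness[where f'=\<pi>]) auto
  have "(\<Sum>a\<in>A. W a False * sqrt (V a True / V a False)) = (\<Sum>a\<in>A. W (\<pi> a) False * sqrt (V (\<pi> a) True / V (\<pi> a) False))"
    using sum.reindex_bij_betw[OF bij, of "\<lambda>a. W a False * sqrt (V a True / V a False)"] by simp
  also have "\<dots> = (\<Sum>a\<in>A. W a True * sqrt (V a False / V a True))"
  proof (rule sum.cong)
    fix a assume a: "a \<in> A"
    have "V (\<pi> a) True = V a False" using assms a unfolding symP_def by metis
    moreover have "V (\<pi> a) False = V a True" "W (\<pi> a) False = W a True" using assms a unfolding symP_def by metis+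
    ultimately show "W (\<pi> a) False * sqrt (V (\<pi> a) True / V (\<pi> a) False) = W a True * sqrt (V a False / V a True)" by simp
  qed simp
  finally show ?thesis by simp
qed

lemma Z_plus:
  assumes fin: "finite A" and s: "symP A W V \<pi>"
  shows "Zmis {Trip a b u | a b u. a \<in> A \<and> b \<in> A} (ch_plus W) (ch_plus V) = (Zmis A W V)\<^sup>2"
proof -
  have eq: "{Trip a b u | a b u. a \<in> A \<and> b \<in> A} = (\<lambda>(a,b,u). Trip a b u) ` (A \<times> A \<times> UNIV)"
    by (auto simp: image_iff)
  have inj: "inj_on (\<lambda>(a,b,u). Trip a b u) (A \<times> A \<times> UNIV)"
    by (auto simp: inj_on_def)
  define g where "g b = W b False * sqrt (LR V b)" for b
  define h where "h a u = 1/2 * W a u * sqrt (V a (\<not> u) / V a u)" for a u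
  have trm: "ch_plus W (Trip a b u) False * sqrt (LR (ch_plus V) (Trip a b u)) = h a u * g b" for a b u
  proof -
    have "LR (ch_plus V) (Trip a b u) = (V a (\<not> u) / V a u) * (V b True / V b False)"
      unfolding LR_def ch_plus_def by (simp add: field_simps)
    then have "sqrt (LR (ch_plus V) (Trip a b u)) = sqrt (V a (\<not> u) / V a u) * sqrt (LR V b)"
      by (simp only: real_sqrt_mult[symmetric] LR_def times_divide_times_eq)
    then show ?thesis unfolding h_def g_def
      by (simp add: ch_plus_def)
  qed
  have "Zmis {Trip a b u | a b u. a \<in> A \<and> b \<in> A} (ch_plus W) (ch_plus V)
     = (\<Sum>(a,b,u)\<in>A \<times> A \<times> UNIV. h a u * g b)"
    unfolding Zmis_def eq using inj by (simp add: sum.reindex trm split_def)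
  also have "\<dots> = (\<Sum>a\<in>A. \<Sum>(b,u)\<in>A \<times> UNIV. h a u * g b)"
    by (rule sum.cartesian_product[symmetric])
  also have "\<dots> = (\<Sum>a\<in>A. \<Sum>b\<in>A. \<Sum>u\<in>UNIV. h a u * g b)"
    by (simp add: sum.cartesian_product split_def)
  also have "\<dots> = (\<Sum>a\<in>A. h a False + h a True) * (\<Sum>b\<in>A. g b)"
    by (simp add: UNIV_bool sum_distrib_left sum_distrib_right algebra_simps sum.distrib)
  also have "(\<Sum>a\<in>A. h a False + h a True) = Zmis A W V"
  proof -
    have "(\<Sum>a\<in>A. h a False + h a True) = 1/2 * (\<Sum>a\<in>A. W a False * sqrt (V a True / V a False)) + 1/2 * (\<Sum>a\<in>A. W a True * sqrt (V a False / V a True))"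
      unfolding h_def by (simp add: sum.distrib sum_distrib_left)
    also have "\<dots> = (\<Sum>a\<in>A. W a False * sqrt (V a True / V a False))"
      using sym_sum[OF s] by simp
    finally show ?thesis unfolding Zmis_def LR_def .
  qed
  also have "(\<Sum>b\<in>A. g b) = Zmis A W V" unfolding Zmis_def g_def ..
  finally show ?thesis by (simp add: power2_eq_square)
qed

lemma symP_plus:
  assumes "symP A W V \<pi>"
  shows "symP {Trip a b u | a b u. a \<in> A \<and> b \<in> A} (ch_plus W) (ch_plus V)
     (\<lambda>z. case z of Trip a b u \<Rightarrow> Trip (\<pi> a) (\<pi> b) u | _ \<Rightarrow> z)"
  unfolding symP_def
proof (intro ballI)
  fix z assume "z \<in> {Trip a b u | a b u. a \<in> A \<and> b \<in> A}"
  then obtain a b u where z: "z = Trip a b u" and a: "a \<in> A" and b: "b \<in> A" by blast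
  have pa: "\<pi> a \<in> A" "\<pi> (\<pi> a) = a" "W a True = W (\<pi> a) False" "V a True = V (\<pi> a) False"
    "W a False = W (\<pi> a) True" "V a False = V (\<pi> a) True"
    using assms a unfolding symP_def by metis+
  have pb: "\<pi> b \<in> A" "\<pi> (\<pi> b) = b" "W b True = W (\<pi> b) False" "V b True = V (\<pi> b) False"
    using assms b unfolding symP_def by metis+
  show "(case z of Trip a b u \<Rightarrow> Trip (\<pi> a) (\<pi> b) u | _ \<Rightarrow> z) \<in> {Trip a b u | a b u. a \<in> A \<and> b \<in> A} \<and>
         (case (case z of Trip a b u \<Rightarrow> Trip (\<pi> a) (\<pi> b) u | _ \<Rightarrow> z) of Trip a b u \<Rightarrow> Trip (\<pi> a) (\<pi> b) u | _ \<Rightarrow> (case z of Trip a b u \<Rightarrow> Trip (\<pi> a) (\<pi> b) u | _ \<Rightarrow> z)) = z \<and>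
         ch_plus W z True = ch_plus W (case z of Trip a b u \<Rightarrow> Trip (\<pi> a) (\<pi> b) u | _ \<Rightarrow> z) False \<and>
         ch_plus V z True = ch_plus V (case z of Trip a b u \<Rightarrow> Trip (\<pi> a) (\<pi> b) u | _ \<Rightarrow> z) False"
    using pa pb by (cases u) (auto simp: z ch_plus_def)
qed

lemma symP_minus:
  assumes "symP A W V \<pi>"
  shows "symP {Pair a b | a b. a \<in> A \<and> b \<in> A} (ch_minus W) (ch_minus V)
     (\<lambda>z. case z of Pair a b \<Rightarrow> Pair (\<pi> a) b | _ \<Rightarrow> z)"
  unfolding symP_def
proof (intro ballI)
  fix z assume "z \<in> {Pair a b | a b. a \<in> A \<and> b \<in> A}"
  then obtain a b where z: "z = Pair a b" and a: "a \<in> A" and b: "b \<in> A" by blast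
  have pa: "\<pi> a \<in> A" "\<pi> (\<pi> a) = a" "W a True = W (\<pi> a) False" "V a True = V (\<pi> a) False"
    "W a False = W (\<pi> a) True" "V a False = V (\<pi> a) True"
    using assms a unfolding symP_def by metis+
  show "(case z of Pair a b \<Rightarrow> Pair (\<pi> a) b | _ \<Rightarrow> z) \<in> {Pair a b | a b. a \<in> A \<and> b \<in> A} \<and>
         (case (case z of Pair a b \<Rightarrow> Pair (\<pi> a) b | _ \<Rightarrow> z) of Pair a b \<Rightarrow> Pair (\<pi> a) b | _ \<Rightarrow> (case z of Pair a b \<Rightarrow> Pair (\<pi> a) b | _ \<Rightarrow> z)) = z \<and>
         ch_minus W z True = ch_minus W (case z of Pair a b \<Rightarrow> Pair (\<pi> a) b | _ \<Rightarrow> z) False \<and>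
         ch_minus V z True = ch_minus V (case z of Pair a b \<Rightarrow> Pair (\<pi> a) b | _ \<Rightarrow> z) False"
    using pa b by (auto simp: z ch_minus_def UNIV_bool)
qed

lemma synth_props:
  fixes W V :: "'y::finite \<Rightarrow> bool \<Rightarrow> real"
  assumes "sym_same_perm W V"
  shows "finite (alph n i :: 'y out set) \<and> (\<exists>\<pi>. symP (alph n i) (synth W n i) (synth V n i) \<pi>)"
proof (induction n arbitrary: i)
  case 0
  from assms obtain \<pi> :: "'y \<Rightarrow> 'y" where p: "\<forall>y. \<pi> (\<pi> y) = y" "\<forall>y. W y True = W (\<pi> y) False \<and> V y True = V (\<pi> y) False"
    unfolding sym_same_perm_def by blast
  have "symP (range Leaf) (lift_ch W) (lift_ch V) (\<lambda>z. case z of Leaf y \<Rightarrow> Leaf (\<pi> y) | _ \<Rightarrow> z)"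
    unfolding symP_def using p by (auto simp: lift_ch_def)
  then show ?case by auto
next
  case (Suc n)
  show ?case
  proof (cases "even i")
    case True
    let ?A = "alph n (i div 2) :: 'y out set"
    from Suc.IH obtain \<pi> where fin: "finite ?A" and s: "symP ?A (synth W n (i div 2)) (synth V n (i div 2)) \<pi>" by blast
    have e: "{Trip a b u | a b u. a \<in> ?A \<and> b \<in> ?A} = (\<lambda>(a,b,u). Trip a b u) ` (?A \<times> ?A \<times> UNIV)"
      by (auto simp: image_iff)
    have f: "finite {Trip a b u | a b u. a \<in> ?A \<and> b \<in> ?A}" unfolding e using fin by simp
    show ?thesis using True symP_plus[OF s] f by auto
  next
    case False
    let ?A = "alph n ((i+1) div 2) :: 'y out set"
    from Suc.IH obtain \<pi> where fin: "finite ?A" and s: "symP ?A (synth W n ((i+1) div 2)) (synth V n ((i+1) div 2)) \<pi>" by blast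
    have e: "{Pair a b | a b. a \<in> ?A \<and> b \<in> ?A} = (\<lambda>(a,b). Pair a b) ` (?A \<times> ?A)"
      by (auto simp: image_iff)
    have f: "finite {Pair a b | a b. a \<in> ?A \<and> b \<in> ?A}" unfolding e using fin by simp
    show ?thesis using False symP_minus[OF s] f by auto
  qed
qed

lemma synth_nonneg:
  assumes "bdmc W"
  shows "synth W n i z u \<ge> 0"
proof (induction n arbitrary: i z u)
  case 0
  then show ?case using assms by (auto simp: lift_ch_def bdmc_def split: out.split)
next
  case (Suc n)
  then show ?case by (auto simp: ch_plus_def ch_minus_def UNIV_bool split: out.split intro!: add_nonneg_nonneg)
qed

lemma ZN_plus:
  fixes W V :: "'y::finite \<Rightarrow> bool \<Rightarrow> real"
  assumes "sym_same_perm W V"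
  shows "ZN (Suc n) (2 * i) W V = (ZN n i W V)\<^sup>2"
proof -
  obtain \<pi> where fin: "finite (alph n i :: 'y out set)" and s: "symP (alph n i) (synth W n i) (synth V n i) \<pi>"
    using synth_props[OF assms] by blast
  show ?thesis unfolding ZN_def using Z_plus[OF fin s] by simp
qed

theorem mainTheorem11:
  fixes W V :: "'y::finite \<Rightarrow> bool \<Rightarrow> real"
  assumes "bdmc W" and "bdmc V" and "sym_same_perm W V"
  shows "\<forall>n i. 1 \<le> i \<and> i \<le> 2 ^ n \<longrightarrow>
           ZN (Suc n) (2 * i) W V = (ZN n i W V)\<^sup>2 \<and>
           (ZN n i W V - ZN n i V V \<le> 0 \<longrightarrow> ZN (Suc n) (2 * i) W V - ZN (Suc n) (2 * i) V V \<le> 0)"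
proof (intro allI impI conjI)
  fix n i
  have sVV: "sym_same_perm V V" using assms(3) unfolding sym_same_perm_def by blast
  show e1: "ZN (Suc n) (2 * i) W V = (ZN n i W V)\<^sup>2" by (rule ZN_plus[OF assms(3)])
  have e2: "ZN (Suc n) (2 * i) V V = (ZN n i V V)\<^sup>2" by (rule ZN_plus[OF sVV])
  have nn: "ZN n i W V \<ge> 0" unfolding ZN_def Zmis_def
    using synth_nonneg[OF assms(1)] synth_nonneg[OF assms(2)]
    by (intro sum_nonneg mult_nonneg_nonneg) (auto simp: LR_def)
  assume "ZN n i W V - ZN n i V V \<le> 0"
  then have "ZN n i W V \<le> ZN n i V V" by simp
  then have "(ZN n i W V)\<^sup>2 \<le> (ZN n i V V)\<^sup>2" using nn by (intro power_mono) auto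
  then show "ZN (Suc n) (2 * i) W V - ZN (Suc n) (2 * i) V V \<le> 0" using e1 e2 by simp
qed

end
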